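(* Let $p$ be an odd prime. If $M$ is a locally finitely generated $A$-module and $x\in M$ satisfies $\Phi_nx=0$ for some $n\ge0$, then $A_nx=0$.
   Context: $A$ is the ring of degree zero stable operations in $p$-local complex $K$-theory. Fix $q$ primitive mod $p^2$, $\Psi^q\in A$ the Adams operation, $q_i=q^{(-1)^i\lfloor i/2\rfloor}$, $\Theta_n(X)=\prod_{i=1}^n(X-q_i)$, $\Phi_n=\Theta_n(\Psi^q)$; every element of $A$ is uniquely a convergent sum $\sum_{n\ge0}a_n\Phi_n$ with $a_n\in\mathbb{Z}_{(p)}$, and $A_m=\{\sum_{n\ge m}a_n\Phi_n\}$. An $A$-module $M$ is locally finitely generated if $Ax$ is finitely generated over $\mathbb{Z}_{(p)}$ for every $x\in M$. *)

theory Defs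
  imports "HOL-Algebra.Algebra" "HOL-Computational_Algebra.Polynomial"
    "HOL-Number_Theory.Number_Theory"
begin

definition Zp :: "nat \<Rightarrow> rat set" where
  "Zp p = {r. \<not> int p dvd snd (quotient_of r)}"

definition qi :: "nat \<Rightarrow> nat \<Rightarrow> rat" where
  "qi q i = (of_nat q :: rat) powi ((-1) ^ i * int (i div 2))"

definition Theta :: "nat \<Rightarrow> nat \<Rightarrow> rat poly" where
  "Theta q n = (\<Prod>i\<in>{1..n}. [:- qi q i, 1:])"

text \<open>An element of A is represented by its coefficient sequence (a_n) in the
  expansion sum_n a_n Phi_n.  Concretely A is the inverse limit of the rings
  Z_(p)[X]/(Theta_n(X)), X corresponding to Psi^q.  The truncation
  sum_{k<n} a_k Theta_k is the image in Z_(p)[X]/(Theta_n).\<close>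
definition Atrunc :: "nat \<Rightarrow> (nat \<Rightarrow> rat) \<Rightarrow> nat \<Rightarrow> rat poly" where
  "Atrunc q a n = (\<Sum>k<n. smult (a k) (Theta q k))"

text \<open>Product: the coefficient of Theta_k in a polynomial of degree at most k
  written in the Theta basis is its coefficient of X^k (Theta_k is monic).\<close>
definition Amult :: "nat \<Rightarrow> (nat \<Rightarrow> rat) \<Rightarrow> (nat \<Rightarrow> rat) \<Rightarrow> nat \<Rightarrow> rat" where
  "Amult q a b k = coeff ((Atrunc q a (Suc k) * Atrunc q b (Suc k)) mod Theta q (Suc k)) k"

definition Aring :: "nat \<Rightarrow> nat \<Rightarrow> (nat \<Rightarrow> rat) ring" where
  "Aring p q = \<lparr> carrier = {a. \<forall>n. a n \<in> Zp p},
               monoid.mult = Amult q,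
               monoid.one = (\<lambda>n. if n = 0 then 1 else 0),
               ring.zero = (\<lambda>n. 0),
               ring.add = (\<lambda>a b n. a n + b n) \<rparr>"

text \<open>Phi_n = Theta_n(Psi^q), and the constant element c (i.e. c * Phi_0).\<close>
definition Phi :: "nat \<Rightarrow> nat \<Rightarrow> rat" where
  "Phi n = (\<lambda>k. if k = n then 1 else 0)"

definition Aconst :: "rat \<Rightarrow> nat \<Rightarrow> rat" where
  "Aconst c = (\<lambda>k. if k = 0 then c else 0)"

definition Afilt :: "nat \<Rightarrow> nat \<Rightarrow> (nat \<Rightarrow> rat) set" where
  "Afilt p m = {a. (\<forall>n. a n \<in> Zp p) \<and> (\<forall>n<m. a n = 0)}"

definition locally_fg ::
  "nat \<Rightarrow> (nat \<Rightarrow> rat, 'b) module \<Rightarrow> bool" where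
  "locally_fg p M \<longleftrightarrow> (\<forall>x\<in>carrier M. \<exists>S. finite S \<and> S \<subseteq> carrier M \<and>
     {a \<odot>\<^bsub>M\<^esub> x | a. a \<in> {a. \<forall>n. a n \<in> Zp p}} =
     {finsum M (\<lambda>s. Aconst (c s) \<odot>\<^bsub>M\<^esub> s) S | c. \<forall>s\<in>S. c s \<in> Zp p})"

end

theory Submission
  imports Defs
begin

lemma Zp_iff:
  assumes p: "Factorial_Ring.prime p"
  shows "r \<in> Zp p \<longleftrightarrow> (\<exists>a b. b \<noteq> 0 \<and> \<not> int p dvd b \<and> r = of_int a / of_int b)"
proof
  assume "r \<in> Zp p"
  obtain a b where q: "quotient_of r = (a, b)" by (cases "quotient_of r")
  have "b > 0" using q quotient_of_denom_pos by blast
  moreover have "r = of_int a / of_int b" using q quotient_of_div by blast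
  moreover have "\<not> int p dvd b" using \<open>r \<in> Zp p\<close> q by (simp add: Zp_def)
  ultimately show "\<exists>a b. b \<noteq> 0 \<and> \<not> int p dvd b \<and> r = of_int a / of_int b"
    by (intro exI[of _ a] exI[of _ b]) auto
next
  assume "\<exists>a b. b \<noteq> 0 \<and> \<not> int p dvd b \<and> r = of_int a / of_int b"
  then obtain a b where ab: "b \<noteq> 0" "\<not> int p dvd b" "r = of_int a / of_int b" by blast
  obtain a' b' where q: "quotient_of r = (a', b')" by (cases "quotient_of r")
  have b'0: "b' > 0" using q quotient_of_denom_pos by blast
  have r': "r = of_int a' / of_int b'" using q quotient_of_div by blast
  have cop: "coprime a' b'" using q quotient_of_coprime by blast
  have "of_int a' * of_int b = (of_int a * of_int b' :: rat)"
    using ab r' b'0 by (simp add: field_simps)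
  hence eq: "a' * b = a * b'" by (metis of_int_eq_iff of_int_mult)
  hence "b' dvd a' * b" by simp
  hence "b' dvd b" using cop by (metis coprime_commute coprime_dvd_mult_right_iff)
  hence "\<not> int p dvd b'" using ab(2) dvd_trans by blast
  thus "r \<in> Zp p" using q by (simp add: Zp_def)
qed

definition gg :: "nat \<Rightarrow> nat \<Rightarrow> nat \<Rightarrow> rat poly" where
  "gg q l m = (\<Prod>i\<in>{l<..m}. [:- qi q i, 1:])"

lemma Theta_gg: "Theta q n = gg q 0 n"
  unfolding Theta_def gg_def by (rule prod.cong) auto

lemma gg_split: "l \<le> N \<Longrightarrow> N \<le> m \<Longrightarrow> gg q l m = gg q l N * gg q N m"
proof -
  assume a: "l \<le> N" "N \<le> m"
  have "{l<..m} = {l<..N} \<union> {N<..m}" using a by auto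
  thus ?thesis unfolding gg_def by (simp add: prod.union_disjoint ivl_disj_int)
qed

lemma gg_Suc: "l \<le> m \<Longrightarrow> gg q l (Suc m) = gg q l m * [:- qi q (Suc m), 1:]"
proof -
  assume "l \<le> m"
  hence "{l<..Suc m} = insert (Suc m) {l<..m}" by auto
  thus ?thesis unfolding gg_def by (simp add: mult.commute)
qed

lemma gg_monic: "l \<le> m \<Longrightarrow> lead_coeff (gg q l m) = 1 \<and> degree (gg q l m) = m - l"
proof (induction m rule: dec_induct)
  case base
  then show ?case by (simp add: gg_def)
next
  case (step m)
  have ne: "gg q l m \<noteq> 0" using step.IH by auto
  have dg: "degree (gg q l m * [:- qi q (Suc m), 1:]) = degree (gg q l m) + 1"
    using ne by (subst degree_mult_eq) auto
  have "lead_coeff (gg q l m * [:- qi q (Suc m), 1:]) = lead_coeff (gg q l m) * lead_coeff [:- qi q (Suc m), 1:]"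
    by (rule lead_coeff_mult)
  moreover have "lead_coeff [:- qi q (Suc m), 1:] = 1" by simp
  ultimately have "lead_coeff (gg q l m * [:- qi q (Suc m), 1:]) = 1"
    using conjunct1[OF step.IH] by (metis mult_1)
  with dg show ?case using gg_Suc[OF step.hyps(1)] conjunct2[OF step.IH] step.hyps
    by (metis Suc_diff_le Suc_eq_plus1)
qed

lemma Theta_md: "lead_coeff (Theta q n) = 1 \<and> degree (Theta q n) = n"
  unfolding Theta_gg using gg_monic[of 0 n q, OF le0] unfolding diff_zero .

lemma Theta_monic: "lead_coeff (Theta q n) = 1" using Theta_md by blast
lemma Theta_degree: "degree (Theta q n) = n" using Theta_md by blast

lemma Theta_Suc: "Theta q (Suc n) = Theta q n * [:- qi q (Suc n), 1:]"
  by (simp add: Theta_gg gg_Suc)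

lemma Theta_coeff_high: "i > n \<Longrightarrow> coeff (Theta q n) i = 0"
  using Theta_degree coeff_eq_0 by metis

lemma Atrunc_coeff_high: "i \<ge> N \<Longrightarrow> coeff (Atrunc q c N) i = 0"
  unfolding Atrunc_def by (simp add: coeff_sum Theta_coeff_high)

lemma Atrunc_Suc: "Atrunc q c (Suc k) = Atrunc q c k + smult (c k) (Theta q k)"
  unfolding Atrunc_def by simp

lemma Atrunc_coeff_top: "coeff (Atrunc q c (Suc k)) k = c k"
  using Atrunc_coeff_high[of k k q c] Theta_monic[of q k] Theta_degree[of q k]
  by (simp add: Atrunc_Suc)

lemma small_mod: "(\<And>i. i \<ge> N \<Longrightarrow> coeff x i = 0) \<Longrightarrow> x mod Theta q N = x"
proof -
  assume h: "\<And>i. i \<ge> N \<Longrightarrow> coeff x i = 0"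
  show ?thesis
  proof (cases "x = 0")
    case False
    hence "degree x < N" using h by (metis leading_coeff_0_iff not_le)
    thus ?thesis by (simp add: mod_poly_less Theta_degree)
  qed simp
qed

lemma Atrunc_mod: "Atrunc q c N mod Theta q N = Atrunc q c N"
  by (rule small_mod) (rule Atrunc_coeff_high)

lemma Theta_dvd: "m \<le> n \<Longrightarrow> Theta q m dvd Theta q n"
  unfolding Theta_gg using gg_split[of 0 m n q] by simp

lemma coord:
  "f mod Theta q N = (\<Sum>j<N. smult (coeff (f mod Theta q (Suc j)) j) (Theta q j))"
proof (induction N)
  case 0
  then show ?case by (simp add: Theta_def)
next
  case (Suc N)
  define r where "r = f mod Theta q (Suc N)"
  have "r mod Theta q N = f mod Theta q N"
    unfolding r_def by (rule mod_mod_cancel[OF Theta_dvd]) simp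
  have rh: "coeff r i = 0" if "i \<ge> Suc N" for i
  proof -
    have "Theta q (Suc N) \<noteq> 0" using Theta_monic[of q "Suc N"] by auto
    hence "r = 0 \<or> degree r < Suc N" unfolding r_def using degree_mod_less Theta_degree by metis
    thus ?thesis using that coeff_eq_0 by fastforce
  qed
  define r' where "r' = r - smult (coeff r N) (Theta q N)"
  have "coeff r' i = 0" if "i \<ge> N" for i
  proof (cases "i = N")
    case True thus ?thesis unfolding r'_def using Theta_monic[of q N] Theta_degree[of q N] by simp
  next
    case False
    hence "i \<ge> Suc N" using that by simp
    thus ?thesis unfolding r'_def using rh Theta_coeff_high[of N i q] by simp
  qed
  hence "r' mod Theta q N = r'" by (rule small_mod)
  moreover have "r' mod Theta q N = r mod Theta q N"
    unfolding r'_def by (simp add: poly_mod_diff_left mod_smult_left)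
  ultimately have "r = smult (coeff r N) (Theta q N) + f mod Theta q N"
    using \<open>r mod Theta q N = f mod Theta q N\<close> unfolding r'_def by (metis diff_eq_eq add.commute)
  thus ?case using Suc.IH unfolding r_def by simp
qed


lemma qi_explicit:
  "qi q i = (if even i then of_nat q ^ (i div 2) else 1 / of_nat q ^ (i div 2))"
  unfolding qi_def by (auto simp: power_int_minus power_int_of_nat divide_inverse)

context
  fixes p :: nat
  assumes p: "Factorial_Ring.prime p"
begin

lemma pint_prime: "Factorial_Ring.prime (int p)" using p by simp

lemma Zp_intI: "of_int a \<in> Zp p"
proof -
  have "\<not> int p dvd 1" using pint_prime by (meson not_prime_unit)
  hence "\<exists>a' b. b \<noteq> 0 \<and> \<not> int p dvd b \<and> (of_int a :: rat) = of_int a' / of_int b"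
    by (intro exI[of _ a] exI[of _ 1]) simp
  thus ?thesis using Zp_iff[OF p] by blast
qed

lemma Zp_natI: "of_nat a \<in> Zp p"
  using Zp_intI[of "int a"] by simp

lemma Zp_0 [simp]: "0 \<in> Zp p" using Zp_intI[of 0] by simp
lemma Zp_1 [simp]: "1 \<in> Zp p" using Zp_intI[of 1] by simp

lemma Zp_add [intro]:
  assumes "r \<in> Zp p" "s \<in> Zp p" shows "r + s \<in> Zp p"
proof -
  obtain a b where ab: "b \<noteq> 0" "\<not> int p dvd b" "r = of_int a / of_int b" using assms(1) Zp_iff[OF p] by blast
  obtain c d where cd: "d \<noteq> 0" "\<not> int p dvd d" "s = of_int c / of_int d" using assms(2) Zp_iff[OF p] by blast
  have "r + s = of_int (a*d + c*b) / of_int (b*d)" using ab cd by (simp add: field_simps)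
  moreover have "\<not> int p dvd b*d" using ab cd pint_prime by (simp add: prime_dvd_mult_iff)
  moreover have "b * d \<noteq> 0" using ab cd by simp
  ultimately show ?thesis using Zp_iff[OF p] by blast
qed

lemma Zp_mult [intro]:
  assumes "r \<in> Zp p" "s \<in> Zp p" shows "r * s \<in> Zp p"
proof -
  obtain a b where ab: "b \<noteq> 0" "\<not> int p dvd b" "r = of_int a / of_int b" using assms(1) Zp_iff[OF p] by blast
  obtain c d where cd: "d \<noteq> 0" "\<not> int p dvd d" "s = of_int c / of_int d" using assms(2) Zp_iff[OF p] by blast
  have "r * s = of_int (a * c) / of_int (b*d)" using ab cd by (simp add: field_simps)
  moreover have "\<not> int p dvd b*d" using ab cd pint_prime by (simp add: prime_dvd_mult_iff)
  moreover have "b * d \<noteq> 0" using ab cd by simp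
  ultimately show ?thesis using Zp_iff[OF p] by blast
qed

lemma Zp_uminus [intro]:
  assumes "r \<in> Zp p" shows "- r \<in> Zp p"
  using Zp_mult[OF Zp_intI[of "-1"] assms] by simp

lemma Zp_diff [intro]:
  assumes "r \<in> Zp p" "s \<in> Zp p" shows "r - s \<in> Zp p"
  using Zp_add[OF assms(1) Zp_uminus[OF assms(2)]] by simp

lemma Zp_power [intro]: "r \<in> Zp p \<Longrightarrow> r ^ k \<in> Zp p"
  by (induction k) auto

lemma Zp_sum [intro]: "(\<And>i. i \<in> A \<Longrightarrow> f i \<in> Zp p) \<Longrightarrow> sum f A \<in> Zp p"
  by (induction A rule: infinite_finite_induct) auto

lemma Zp_inv_int:
  assumes "\<not> int p dvd a" shows "1 / of_int a \<in> Zp p"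
proof -
  have "a \<noteq> 0" using assms by auto
  hence "\<exists>a' b. b \<noteq> 0 \<and> \<not> int p dvd b \<and> 1 / (of_int a :: rat) = of_int a' / of_int b"
    using assms by (intro exI[of _ 1] exI[of _ a]) simp
  thus ?thesis using Zp_iff[OF p] by blast
qed

lemma inv_p_notin: "1 / of_nat p \<notin> Zp p"
proof
  assume "1 / of_nat p \<in> Zp p"
  then obtain a b where ab: "b \<noteq> 0" "\<not> int p dvd b" "1 / of_nat p = (of_int a / of_int b :: rat)"
    using Zp_iff[OF p] by blast
  have p0: "p \<noteq> 0" using p by auto
  have "of_int b = (of_int (int p * a) :: rat)" using ab p0 by (simp add: field_simps)
  hence "b = int p * a" by (metis of_int_eq_iff)
  thus False using ab by simp
qed

definition pZ :: "rat set" where "pZ = {r. r / of_nat p \<in> Zp p}"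

lemma p_pos: "p > 0" using p prime_gt_0_nat by blast

lemma p0: "(of_nat p :: rat) \<noteq> 0" using p_pos by simp

lemma ns_le: "n \<le> 2 * (p - 1) * n"
proof -
  have "1 \<le> 2 * (p - 1)" using prime_ge_2_nat[OF p] by simp
  hence "1 * n \<le> 2 * (p - 1) * n" by (rule mult_le_mono1)
  thus ?thesis by simp
qed

lemma pZ_iff: "r \<in> pZ \<longleftrightarrow> (\<exists>s \<in> Zp p. r = of_nat p * s)"
proof
  assume "r \<in> pZ"
  hence "r / of_nat p \<in> Zp p" by (simp add: pZ_def)
  moreover have "r = of_nat p * (r / of_nat p)" using p0 by simp
  ultimately show "\<exists>s \<in> Zp p. r = of_nat p * s" by blast
next
  assume "\<exists>s \<in> Zp p. r = of_nat p * s"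
  then obtain s where "s \<in> Zp p" "r = of_nat p * s" by blast
  thus "r \<in> pZ" using p0 by (simp add: pZ_def)
qed

lemma pZ_Zp: "r \<in> pZ \<Longrightarrow> r \<in> Zp p"
proof -
  assume "r \<in> pZ"
  then obtain s where "s \<in> Zp p" "r = of_nat p * s" using pZ_iff by blast
  thus ?thesis using Zp_mult[OF Zp_natI] by blast
qed

lemma pZ_add [intro]: "r \<in> pZ \<Longrightarrow> s \<in> pZ \<Longrightarrow> r + s \<in> pZ"
proof -
  assume "r \<in> pZ" "s \<in> pZ"
  hence "r / of_nat p + s / of_nat p \<in> Zp p" unfolding pZ_def using Zp_add by blast
  thus ?thesis unfolding pZ_def by (simp add: add_divide_distrib)
qed

lemma pZ_mult [intro]: "r \<in> Zp p \<Longrightarrow> s \<in> pZ \<Longrightarrow> r * s \<in> pZ"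
proof -
  assume "r \<in> Zp p" "s \<in> pZ"
  hence "r * (s / of_nat p) \<in> Zp p" unfolding pZ_def using Zp_mult by blast
  thus ?thesis unfolding pZ_def by simp
qed

lemma pZ_uminus [intro]: "r \<in> pZ \<Longrightarrow> - r \<in> pZ"
proof -
  assume "r \<in> pZ"
  hence "- (r / of_nat p) \<in> Zp p" unfolding pZ_def using Zp_uminus by blast
  thus ?thesis unfolding pZ_def by simp
qed

lemma pZ_diff [intro]: "r \<in> pZ \<Longrightarrow> s \<in> pZ \<Longrightarrow> r - s \<in> pZ"
proof -
  assume "r \<in> pZ" "s \<in> pZ"
  hence "r + - s \<in> pZ" using pZ_add pZ_uminus by blast
  thus ?thesis by simp
qed

lemma pZ_0 [simp]: "0 \<in> pZ" by (simp add: pZ_def)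

lemma pZ_int: "int p dvd a \<Longrightarrow> of_int a \<in> pZ"
proof -
  assume "int p dvd a"
  then obtain k where "a = int p * k" by (elim dvdE)
  hence "of_int a / of_nat p = (of_int k :: rat)" using p0 by simp
  thus ?thesis unfolding pZ_def using Zp_intI[of k] by simp
qed


lemma Zp_val:
  assumes "r \<in> Zp p" "r \<noteq> 0"
  shows "\<exists>e u. u \<in> Zp p \<and> 1 / u \<in> Zp p \<and> r = of_nat p ^ e * u"
proof -
  obtain a b where ab: "b \<noteq> 0" "\<not> int p dvd b" "r = of_int a / of_int b" using assms(1) Zp_iff[OF p] by blast
  have a0: "a \<noteq> 0" using ab assms(2) by auto
  have nu: "\<not> is_unit (int p)" using pint_prime by (meson not_prime_unit)
  obtain a' where a': "a = int p ^ multiplicity (int p) a * a'" "\<not> int p dvd a'"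
    using multiplicity_decompose'[OF a0 nu] by blast
  define e where "e = multiplicity (int p) a"
  have a'0: "a' \<noteq> 0" using a' a0 by auto
  have "of_int a' / of_int b \<in> Zp p" using ab Zp_iff[OF p] by blast
  moreover have "1 / (of_int a' / of_int b) \<in> Zp p"
    using a' a'0 Zp_iff[OF p, of "of_int b / of_int a'"] by auto
  moreover have "r = of_nat p ^ e * (of_int a' / of_int b)"
    using ab a' unfolding e_def by (metis of_int_mult of_int_of_nat_eq of_int_power times_divide_eq_right)
  ultimately show ?thesis by blast
qed

lemma Zp_inter:
  assumes "r \<in> Zp p" "\<And>k. \<exists>s \<in> Zp p. r = of_nat p ^ k * s"
  shows "r = 0"
proof (rule ccontr)
  assume "r \<noteq> 0"
  then obtain e u where eu: "u \<in> Zp p" "1 / u \<in> Zp p" "r = of_nat p ^ e * u"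
    using Zp_val assms(1) by blast
  obtain s where s: "s \<in> Zp p" "r = of_nat p ^ Suc e * s" using assms(2) by blast
  have pp: "(of_nat p :: rat) \<noteq> 0" using p_pos by simp
  have "u = of_nat p * s" using eu s pp by simp
  hence u0: "u \<noteq> 0" using \<open>r \<noteq> 0\<close> eu by auto
  have "1 / of_nat p = s * (1 / u)" using \<open>u = of_nat p * s\<close> u0 pp by (simp add: field_simps)
  moreover have "s * (1 / u) \<in> Zp p" using Zp_mult s(1) eu(2) by blast
  ultimately have "1 / of_nat p \<in> Zp p" by simp
  thus False using inv_p_notin by blast
qed


definition intp :: "rat poly \<Rightarrow> bool" where "intp f \<longleftrightarrow> (\<forall>i. coeff f i \<in> Zp p)"

lemma intp_0 [simp]: "intp 0" by (simp add: intp_def)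
lemma intp_1 [simp]: "intp 1" by (simp add: intp_def coeff_1)
lemma intp_const [intro]: "c \<in> Zp p \<Longrightarrow> intp [:c:]" by (simp add: intp_def coeff_pCons split: nat.split)
lemma intp_lin [intro]: "c \<in> Zp p \<Longrightarrow> d \<in> Zp p \<Longrightarrow> intp [:c, d:]"
  by (simp add: intp_def coeff_pCons split: nat.split)
lemma intp_add [intro]: "intp f \<Longrightarrow> intp g \<Longrightarrow> intp (f + g)" by (auto simp: intp_def)
lemma intp_diff [intro]: "intp f \<Longrightarrow> intp g \<Longrightarrow> intp (f - g)" by (auto simp: intp_def)
lemma intp_uminus [intro]: "intp f \<Longrightarrow> intp (- f)" by (auto simp: intp_def)
lemma intp_smult [intro]: "c \<in> Zp p \<Longrightarrow> intp f \<Longrightarrow> intp (smult c f)" by (auto simp: intp_def)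
lemma intp_monom [intro]: "c \<in> Zp p \<Longrightarrow> intp (monom c k)" by (auto simp: intp_def coeff_monom)
lemma intp_mult [intro]: "intp f \<Longrightarrow> intp g \<Longrightarrow> intp (f * g)"
  unfolding intp_def coeff_mult by (intro allI Zp_sum) auto
lemma intp_sum [intro]: "(\<And>i. i \<in> A \<Longrightarrow> intp (f i)) \<Longrightarrow> intp (sum f A)"
  by (induction A rule: infinite_finite_induct) auto
lemma intp_prod [intro]: "(\<And>i. i \<in> A \<Longrightarrow> intp (f i)) \<Longrightarrow> intp (prod f A)"
  by (induction A rule: infinite_finite_induct) auto

lemma intp_divmod:
  assumes D: "intp D" "lead_coeff D = 1"
  shows "intp f \<Longrightarrow> intp (f div D) \<and> intp (f mod D)"
proof (induction "degree f" arbitrary: f rule: less_induct)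
  case less
  have D0: "D \<noteq> 0" using D by auto
  show ?case
  proof (cases "degree f < degree D")
    case True
    thus ?thesis using less.prems by (simp add: div_poly_less mod_poly_less)
  next
    case False
    define c where "c = lead_coeff f"
    define k where "k = degree f - degree D"
    define f' where "f' = f - monom c k * D"
    have c: "c \<in> Zp p" using less.prems by (simp add: intp_def c_def)
    have if': "intp f'" unfolding f'_def using c less.prems D by auto
    have "coeff f' (degree f) = 0"
      using False D unfolding f'_def c_def k_def by (simp add: coeff_monom_mult)
    moreover have "degree f' \<le> degree f"
    proof -
      have "degree (monom c k * D) \<le> degree f"
        using degree_mult_le[of "monom c k" D] degree_monom_le[of c k] False unfolding k_def by linarith
      thus ?thesis unfolding f'_def using degree_diff_le by blast
    qed
    ultimately have "f' = 0 \<or> degree f' < degree f"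
      by (metis le_neq_implies_less leading_coeff_0_iff)
    have feq: "f = f' + monom c k * D" unfolding f'_def by simp
    have dv: "f div D = monom c k + f' div D" using D0 feq by (metis div_mult_self1 add.commute)
    have md: "f mod D = f' mod D" using feq by (metis mod_mult_self1)
    show ?thesis
    proof (cases "f' = 0")
      case True thus ?thesis using dv md c by auto
    next
      case False
      hence "degree f' < degree f" using \<open>f' = 0 \<or> degree f' < degree f\<close> by blast
      from less.hyps[OF this if'] show ?thesis using dv md c by auto
    qed
  qed
qed


definition cg :: "rat poly \<Rightarrow> rat poly \<Rightarrow> rat poly \<Rightarrow> bool" where
  "cg D f g \<longleftrightarrow> (\<exists>U W. intp U \<and> intp W \<and> f - g = smult (of_nat p) U + D * W)"

lemma cg_refl [intro]: "cg D f f"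
  unfolding cg_def by (intro exI[of _ 0]) auto

lemma cgE: "cg D f g \<Longrightarrow> (\<And>U W. intp U \<Longrightarrow> intp W \<Longrightarrow> f - g = smult (of_nat p) U + D * W \<Longrightarrow> P) \<Longrightarrow> P"
  unfolding cg_def by blast

lemma cgI: "intp U \<Longrightarrow> intp W \<Longrightarrow> f - g = smult (of_nat p) U + D * W \<Longrightarrow> cg D f g"
  unfolding cg_def by blast

lemma cg_sym: assumes "cg D f g" shows "cg D g f"
proof -
  obtain U W where 1: "intp U" "intp W" "f - g = smult (of_nat p) U + D * W" using assms by (rule cgE)
  have "g - f = smult (of_nat p) (- U) + D * (- W)" using 1(3) by (simp add: algebra_simps)
  thus ?thesis using 1 by (intro cgI[where U="- U" and W="- W"]) auto
qed

lemma cg_trans: assumes "cg D f g" "cg D g h" shows "cg D f h"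
proof -
  obtain U W where 1: "intp U" "intp W" "f - g = smult (of_nat p) U + D * W" using assms(1) by (rule cgE)
  obtain U' W' where 2: "intp U'" "intp W'" "g - h = smult (of_nat p) U' + D * W'" using assms(2) by (rule cgE)
  have "f - h = (f - g) + (g - h)" by simp
  also have "\<dots> = smult (of_nat p) (U + U') + D * (W + W')"
    unfolding 1(3) 2(3) by (simp add: smult_add_right distrib_left)
  finally show ?thesis using 1 2 by (intro cgI[where U="U + U'" and W="W + W'"]) auto
qed

lemma cg_add: assumes "cg D f g" "cg D f' g'" shows "cg D (f + f') (g + g')"
proof -
  obtain U W where 1: "intp U" "intp W" "f - g = smult (of_nat p) U + D * W" using assms(1) by (rule cgE)
  obtain U' W' where 2: "intp U'" "intp W'" "f' - g' = smult (of_nat p) U' + D * W'" using assms(2) by (rule cgE)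
  have "(f + f') - (g + g') = (f - g) + (f' - g')" by simp
  also have "\<dots> = smult (of_nat p) (U + U') + D * (W + W')"
    unfolding 1(3) 2(3) by (simp add: smult_add_right distrib_left)
  finally show ?thesis using 1 2 by (intro cgI[where U="U + U'" and W="W + W'"]) auto
qed

lemma cg_mult: assumes "intp h" "cg D f g" shows "cg D (h * f) (h * g)"
proof -
  obtain U W where 1: "intp U" "intp W" "f - g = smult (of_nat p) U + D * W" using assms(2) by (rule cgE)
  have "h * f - h * g = h * (f - g)" by (simp add: right_diff_distrib)
  also have "\<dots> = smult (of_nat p) (h * U) + D * (h * W)"
    unfolding 1(3) by (simp add: distrib_left mult_smult_right mult.left_commute)
  finally show ?thesis using 1 assms(1) by (intro cgI[where U="h * U" and W="h * W"]) auto
qed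

lemma cg_mult_mod: assumes "intp h" "cg D f g" shows "cg (h * D) (h * f) (h * g)"
proof -
  obtain U W where 1: "intp U" "intp W" "f - g = smult (of_nat p) U + D * W" using assms(2) by (rule cgE)
  have "h * f - h * g = h * (f - g)" by (simp add: right_diff_distrib)
  also have "\<dots> = smult (of_nat p) (h * U) + (h * D) * W"
    unfolding 1(3) by (simp add: distrib_left mult_smult_right mult.assoc)
  finally show ?thesis using 1 assms(1) by (intro cgI[where U="h * U" and W="W"]) auto
qed

lemma cg_smult: "c \<in> Zp p \<Longrightarrow> cg D f g \<Longrightarrow> cg D (smult c f) (smult c g)"
  using cg_mult[of "[:c:]" D f g] by auto

lemma cg_dvd: assumes "intp E" "cg (E * D) f g" shows "cg D f g"
proof -
  obtain U W where 1: "intp U" "intp W" "f - g = smult (of_nat p) U + (E * D) * W" using assms(2) by (rule cgE)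
  have "f - g = smult (of_nat p) U + D * (E * W)" unfolding 1(3) by (simp add: mult.left_commute mult.commute)
  thus ?thesis using 1 assms(1) by (intro cgI[where U="U" and W="E * W"]) auto
qed

lemma cg_sum: "(\<And>i. i \<in> A \<Longrightarrow> cg D (f i) (g i)) \<Longrightarrow> cg D (sum f A) (sum g A)"
  by (induction A rule: infinite_finite_induct) (auto intro: cg_add)

lemma cg_multiple: "intp W \<Longrightarrow> cg D (D * W) 0"
  unfolding cg_def by (rule exI[of _ 0], rule exI[of _ W]) auto

lemma cg_pmult: "intp U \<Longrightarrow> cg D (smult (of_nat p) U) 0"
  unfolding cg_def by (rule exI[of _ U], rule exI[of _ 0]) auto

lemma cg_modD: assumes "intp D" "lead_coeff D = 1" "intp f" shows "cg D f (f mod D)"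
proof -
  have e: "f div D * D + f mod D = f" by (rule div_mult_mod_eq)
  hence "f - f mod D = f div D * D" by (metis add_diff_cancel_right')
  hence "f - f mod D = smult (of_nat p) 0 + D * (f div D)" by (simp add: mult.commute)
  moreover have "intp (f div D)" using intp_divmod[OF assms(1,2,3)] by blast
  ultimately show ?thesis by (intro cgI[where U=0 and W="f div D"]) auto
qed

lemma cg_coeff:
  assumes "intp D" "lead_coeff D = 1" "cg D f g"
  shows "coeff (f mod D) k - coeff (g mod D) k \<in> pZ"
proof -
  obtain U W where UW: "intp U" "intp W" "f - g = smult (of_nat p) U + D * W"
    using assms(3) by (rule cgE)
  have "f mod D - g mod D = (f - g) mod D" by (simp add: poly_mod_diff_left)
  also have "\<dots> = smult (of_nat p) (U mod D)"
    using UW(3) by (simp add: poly_mod_add_left mod_smult_left)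
  finally have X: "f mod D - g mod D = smult (of_nat p) (U mod D)" .
  have "coeff (f mod D) k - coeff (g mod D) k = coeff (f mod D - g mod D) k" by simp
  also have "\<dots> = of_nat p * coeff (U mod D) k" by (simp only: X coeff_smult)
  finally have Y: "coeff (f mod D) k - coeff (g mod D) k = of_nat p * coeff (U mod D) k" .
  have "coeff (U mod D) k \<in> Zp p" using intp_divmod[OF assms(1,2) UW(1)] intp_def by blast
  thus ?thesis using Y pZ_iff by blast
qed


lemma cg_mult2: "intp B \<Longrightarrow> intp A' \<Longrightarrow> cg D A A' \<Longrightarrow> cg D B B' \<Longrightarrow> cg D (A * B) (A' * B')"
  using cg_mult[of B D A A'] cg_mult[of A' D B B'] cg_trans by (metis mult.commute)

lemma cg0_swap: assumes "cg 0 F Th" shows "cg Th F 0"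
proof -
  obtain U W where 1: "intp U" "intp W" "F - Th = smult (of_nat p) U + 0 * W" using assms by (rule cgE)
  have "F - 0 = smult (of_nat p) U + Th * 1" using 1(3) by (simp add: algebra_simps)
  thus ?thesis using 1 by (intro cgI[where U="U" and W="1"]) auto
qed

context
  fixes q :: nat
  assumes q: "\<not> p dvd q"
begin

lemma q_int: "\<not> int p dvd int q" using q by simp

lemma qpow_nd: "\<not> int p dvd int q ^ k"
  using pint_prime q_int prime_dvd_power by blast

lemma qi_Zp [intro]: "qi q i \<in> Zp p"
proof -
  have "of_nat q ^ (i div 2) \<in> Zp p" using Zp_natI by auto
  moreover have "1 / of_nat q ^ (i div 2) \<in> Zp p"
    using Zp_inv_int[of "int q ^ (i div 2)"] qpow_nd by simp
  ultimately show ?thesis by (simp add: qi_explicit)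
qed

lemma intp_gg [intro]: "intp (gg q l m)"
  unfolding gg_def by (intro intp_prod intp_lin) auto

lemma intp_Theta [intro]: "intp (Theta q m)"
  by (simp add: Theta_gg intp_gg)

lemma qi_shift: "qi q (i + 2 * (p - 1) * n) - qi q i \<in> pZ"
proof -
  define t where "t = q ^ ((p - 1) * n)"
  have "[q ^ (p - 1) = 1] (mod p)" using fermat_theorem[OF p q] .
  hence "[t = 1] (mod p)" unfolding t_def by (metis cong_pow power_mult power_one)
  hence "[int t = 1] (mod int p)" by (metis cong_int_iff of_nat_1)
  hence dv: "int p dvd int t - 1" by (simp add: cong_iff_dvd_diff)
  hence t1: "of_nat t - 1 \<in> pZ" using pZ_int[of "int t - 1"] by simp
  have tnd: "\<not> int p dvd int t" unfolding t_def using qpow_nd by (simp add: of_nat_power)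
  have ti: "1 / of_nat t \<in> Zp p" using Zp_inv_int[OF tnd] by simp
  have t0: "(of_nat t :: rat) \<noteq> 0" using tnd by (metis dvd_0_right of_nat_0_eq_iff of_nat_eq_0_iff)
  have ev: "even (i + 2 * (p - 1) * n) = even i" by simp
  have dv2: "(i + 2 * (p - 1) * n) div 2 = i div 2 + (p - 1) * n" by simp
  show ?thesis
  proof (cases "even i")
    case True
    hence "qi q (i + 2 * (p - 1) * n) - qi q i = qi q i * (of_nat t - 1)"
      using ev dv2 by (simp add: qi_explicit t_def power_add algebra_simps)
    thus ?thesis using t1 qi_Zp pZ_mult by metis
  next
    case False
    have "1 / of_nat t - 1 = (1 / of_nat t) * - (of_nat t - 1 :: rat)" using t0 by (simp add: field_simps)
    hence t2: "1 / of_nat t - 1 \<in> pZ" using t1 ti pZ_mult pZ_uminus by metis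
    have "qi q (i + 2 * (p - 1) * n) - qi q i = qi q i * (1 / of_nat t - 1)"
      using False ev dv2 by (simp add: qi_explicit t_def power_add algebra_simps)
    thus ?thesis using t2 qi_Zp pZ_mult by metis
  qed
qed

lemma gg_shift: "cg 0 (gg q (2 * (p - 1) * n) (2 * (p - 1) * n + J)) (Theta q J)"
proof (induction J)
  case 0
  then show ?case using cg_refl by (simp add: gg_def Theta_def)
next
  case (Suc J)
  define s where "s = 2 * (p - 1) * n"
  have e1: "gg q s (s + Suc J) = gg q s (s + J) * [:- qi q (Suc (s + J)), 1:]"
    using gg_Suc[of s "s + J" q] by simp
  have h: "qi q (Suc J + 2 * (p - 1) * n) - qi q (Suc J) \<in> pZ" by (rule qi_shift)
  have "Suc J + 2 * (p - 1) * n = Suc (s + J)" by (simp add: s_def)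
  hence "qi q (Suc (s + J)) - qi q (Suc J) \<in> pZ" using h by metis
  hence "- (qi q (Suc (s + J)) - qi q (Suc J)) \<in> pZ" by (rule pZ_uminus)
  hence "qi q (Suc J) - qi q (Suc (s + J)) \<in> pZ" by simp
  hence "(qi q (Suc J) - qi q (Suc (s + J))) / of_nat p \<in> Zp p" by (simp add: pZ_def)
  moreover have "[:- qi q (Suc (s + J)), 1:] - [:- qi q (Suc J), 1:]
     = smult (of_nat p) [:(qi q (Suc J) - qi q (Suc (s + J))) / of_nat p:]"
    using p_pos by simp
  ultimately have "cg 0 [:- qi q (Suc (s + J)), 1:] [:- qi q (Suc J), 1:]"
    unfolding cg_def by (intro exI[of _ "[:(qi q (Suc J) - qi q (Suc (s + J))) / of_nat p:]"] exI[of _ 0]) auto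
  hence "cg 0 (gg q s (s + J) * [:- qi q (Suc (s + J)), 1:]) (Theta q J * [:- qi q (Suc J), 1:])"
    using Suc.IH unfolding s_def by (intro cg_mult2) (auto intro!: intp_lin qi_Zp)
  thus ?case using e1 Theta_Suc unfolding s_def by simp
qed

lemma keyK:
  assumes "2 * (p - 1) * n + J \<le> m"
  shows "cg (Theta q J) (gg q n m) 0"
proof -
  define s where "s = 2 * (p - 1) * n"
  have ns: "n \<le> s" unfolding s_def by (rule ns_le)
  have "gg q n m = gg q n s * gg q s m" using ns assms s_def by (intro gg_split) auto
  also have "gg q s m = gg q s (s + J) * gg q (s + J) m" using assms s_def by (intro gg_split) auto
  finally have eq: "gg q n m = (gg q n s * gg q (s + J) m) * gg q s (s + J)" by (simp add: ac_simps)
  have "cg (Theta q J) (gg q s (s + J)) 0" using gg_shift cg0_swap s_def by blast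
  hence "cg (Theta q J) ((gg q n s * gg q (s + J) m) * gg q s (s + J)) ((gg q n s * gg q (s + J) m) * 0)"
    by (intro cg_mult) auto
  thus ?thesis using eq by simp
qed


lemma cg0_any: assumes "cg 0 f g" shows "cg D f g"
proof -
  obtain U W where 1: "intp U" "intp W" "f - g = smult (of_nat p) U + 0 * W" using assms by (rule cgE)
  have "f - g = smult (of_nat p) U + D * 0" using 1(3) by simp
  thus ?thesis using 1 by (intro cgI[where U=U and W=0]) auto
qed

lemma Atrunc_Phi: "Atrunc q (Phi n) (Suc k) = (if n \<le> k then Theta q n else 0)"
proof -
  have "Atrunc q (Phi n) (Suc k) = (\<Sum>j\<in>{..<Suc k}. (if j = n then Theta q j else 0))"
    unfolding Atrunc_def Phi_def by (rule sum.cong) auto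
  also have "\<dots> = (if n \<le> k then Theta q n else 0)"
    using sum.delta[of "{..<Suc k}" n "Theta q"] by simp
  finally show ?thesis .
qed

lemma smult_sum_r: "smult c (\<Sum>j\<in>A. g j) = (\<Sum>j\<in>A. smult c (g j))"
  by (induction A rule: infinite_finite_induct) (auto simp: smult_add_right)

lemma ring_step:
  assumes a1: "\<And>k. a k \<in> Zp p" and a2: "\<And>k. k < n \<Longrightarrow> a k = 0"
  shows "\<exists>b. (\<forall>j. b j \<in> Zp p) \<and> (\<forall>k. Amult q (Phi n) b k - a k \<in> pZ)
             \<and> (\<forall>k<n. Amult q (Phi n) b k = 0)"
proof -
  define L where "L j = 2 * (p - 1) * n + Suc j" for j
  define H where "H N = (\<Sum>m\<in>{n..<L N}. smult (a m) (gg q n m))" for N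
  define G where "G N = (\<Sum>m\<in>{n..<N}. smult (a m) (gg q n m))" for N
  define b where "b j = coeff (H j mod Theta q (Suc j)) j" for j
  have ns: "n \<le> 2 * (p - 1) * n" by (rule ns_le)
  have nL: "n \<le> L j" for j unfolding L_def using ns by linarith
  have intH: "intp (H N)" for N unfolding H_def using a1 by auto
  have intG: "intp (G N)" for N unfolding G_def using a1 by auto
  have bZ: "b j \<in> Zp p" for j
    unfolding b_def using intp_divmod[OF intp_Theta Theta_monic intH] intp_def by blast
  have c1: "cg (Theta q (Suc j)) (H N) (H j)" if "j \<le> N" for j N
  proof -
    have LL: "L j \<le> L N" using that unfolding L_def by simp
    have "{n..<L N} = {n..<L j} \<union> {L j..<L N}" using nL[of j] LL by auto
    hence HN: "H N = H j + (\<Sum>m\<in>{L j..<L N}. smult (a m) (gg q n m))"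
      unfolding H_def by (simp add: sum.union_disjoint)
    have "cg (Theta q (Suc j)) (\<Sum>m\<in>{L j..<L N}. smult (a m) (gg q n m)) (\<Sum>m\<in>{L j..<L N}. 0)"
    proof (rule cg_sum)
      fix m assume "m \<in> {L j..<L N}"
      hence "2 * (p - 1) * n + Suc j \<le> m" unfolding L_def by simp
      hence "cg (Theta q (Suc j)) (gg q n m) 0" by (rule keyK)
      thus "cg (Theta q (Suc j)) (smult (a m) (gg q n m)) 0" using cg_smult[OF a1] by fastforce
    qed
    hence "cg (Theta q (Suc j)) (H j + (\<Sum>m\<in>{L j..<L N}. smult (a m) (gg q n m))) (H j + (\<Sum>m\<in>{L j..<L N}. 0))"
      by (rule cg_add[OF cg_refl])
    thus ?thesis using HN by simp
  qed
  have c2: "b j - coeff (H N mod Theta q (Suc j)) j \<in> pZ" if "j \<le> N" for j N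
    unfolding b_def using cg_coeff[OF intp_Theta Theta_monic cg_sym[OF c1[OF that]]] .
  have c3: "cg (Theta q N) (Atrunc q b N) (H N)" for N
  proof -
    define d where "d j = b j - coeff (H N mod Theta q (Suc j)) j" for j
    define U where "U = (\<Sum>j<N. smult (d j / of_nat p) (Theta q j))"
    have co: "H N mod Theta q N = (\<Sum>j<N. smult (coeff (H N mod Theta q (Suc j)) j) (Theta q j))"
      by (rule coord)
    have "Atrunc q b N - H N mod Theta q N
       = (\<Sum>j<N. smult (b j) (Theta q j)) - (\<Sum>j<N. smult (coeff (H N mod Theta q (Suc j)) j) (Theta q j))"
      unfolding Atrunc_def co ..
    also have "\<dots> = (\<Sum>j<N. smult (b j) (Theta q j) - smult (coeff (H N mod Theta q (Suc j)) j) (Theta q j))"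
      by (rule sum_subtractf[symmetric])
    also have "\<dots> = (\<Sum>j<N. smult (d j) (Theta q j))"
      unfolding d_def by (rule sum.cong) (simp_all add: smult_diff_left)
    also have "\<dots> = smult (of_nat p) U"
      unfolding U_def smult_sum_r using p_pos by (intro sum.cong) auto
    finally have eq: "Atrunc q b N - H N mod Theta q N = smult (of_nat p) U + 0 * 0" by simp
    have "d j / of_nat p \<in> Zp p" if "j \<in> {..<N}" for j
      using c2[of j N] that unfolding d_def pZ_def by simp
    hence "intp U" unfolding U_def by (intro intp_sum intp_smult intp_Theta) auto
    hence "cg 0 (Atrunc q b N) (H N mod Theta q N)" using eq by (intro cgI[where U=U and W=0]) auto
    hence "cg (Theta q N) (Atrunc q b N) (H N mod Theta q N)" by (rule cg0_any)
    moreover have "cg (Theta q N) (H N mod Theta q N) (H N)"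
      using cg_sym[OF cg_modD[OF intp_Theta Theta_monic intH]] .
    ultimately show ?thesis by (rule cg_trans)
  qed
  have c7: "cg (Theta q N) (Theta q n * Atrunc q b N) (Theta q n * G N)" if "n \<le> N" for N
  proof -
    have TN0: "gg q 0 N = gg q 0 n * gg q n N" using that by (intro gg_split) auto
    have TN: "Theta q N = Theta q n * gg q n N" unfolding Theta_gg by (rule TN0)
    have "cg (Theta q n * gg q n N) (Atrunc q b N) (H N)" using c3[of N] unfolding TN .
    hence h5: "cg (gg q n N) (Atrunc q b N) (H N)" by (rule cg_dvd[OF intp_Theta])
    have NL: "N \<le> L N" unfolding L_def by simp
    define S where "S = (\<Sum>m\<in>{N..<L N}. smult (a m) (gg q N m))"
    have "{n..<L N} = {n..<N} \<union> {N..<L N}" using that NL by auto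
    hence "H N = G N + (\<Sum>m\<in>{N..<L N}. smult (a m) (gg q n m))"
      unfolding H_def G_def by (simp add: sum.union_disjoint)
    also have "(\<Sum>m\<in>{N..<L N}. smult (a m) (gg q n m)) = (\<Sum>m\<in>{N..<L N}. gg q n N * smult (a m) (gg q N m))"
    proof (rule sum.cong)
      fix m assume "m \<in> {N..<L N}"
      hence "gg q n m = gg q n N * gg q N m" using that by (intro gg_split) auto
      thus "smult (a m) (gg q n m) = gg q n N * smult (a m) (gg q N m)" by simp
    qed simp
    also have "\<dots> = gg q n N * S" unfolding S_def by (rule sum_distrib_left[symmetric])
    finally have HG: "H N = G N + gg q n N * S" .
    have "intp S" unfolding S_def using a1 by (intro intp_sum intp_smult intp_gg) auto
    hence "cg (gg q n N) (gg q n N * S) 0" by (rule cg_multiple)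
    hence "cg (gg q n N) (G N + gg q n N * S) (G N + 0)" by (rule cg_add[OF cg_refl])
    hence "cg (gg q n N) (H N) (G N)" using HG by simp
    hence "cg (gg q n N) (Atrunc q b N) (G N)" by (rule cg_trans[OF h5])
    hence "cg (Theta q n * gg q n N) (Theta q n * Atrunc q b N) (Theta q n * G N)"
      by (rule cg_mult_mod[OF intp_Theta])
    thus ?thesis unfolding TN .
  qed
  have c8: "Theta q n * G N = Atrunc q a N" if "n \<le> N" for N
  proof -
    have "Atrunc q a N = (\<Sum>m\<in>{..<n} \<union> {n..<N}. smult (a m) (Theta q m))"
      unfolding Atrunc_def using that by (intro sum.cong) auto
    also have "\<dots> = (\<Sum>m\<in>{n..<N}. smult (a m) (Theta q m))"
      using a2 by (subst sum.union_disjoint) auto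
    also have "\<dots> = (\<Sum>m\<in>{n..<N}. Theta q n * smult (a m) (gg q n m))"
    proof (rule sum.cong)
      fix m assume "m \<in> {n..<N}"
      hence "gg q 0 m = gg q 0 n * gg q n m" by (intro gg_split) auto
      thus "smult (a m) (Theta q m) = Theta q n * smult (a m) (gg q n m)" by (simp add: Theta_gg)
    qed simp
    finally show ?thesis unfolding G_def by (simp add: sum_distrib_left)
  qed
  have main: "Amult q (Phi n) b k - a k \<in> pZ" for k
  proof (cases "n \<le> k")
    case True
    have "Amult q (Phi n) b k = coeff ((Theta q n * Atrunc q b (Suc k)) mod Theta q (Suc k)) k"
      unfolding Amult_def using True by (simp add: Atrunc_Phi)
    moreover have "a k = coeff (Atrunc q a (Suc k) mod Theta q (Suc k)) k"
      by (simp add: Atrunc_mod Atrunc_coeff_top)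
    moreover have "cg (Theta q (Suc k)) (Theta q n * Atrunc q b (Suc k)) (Atrunc q a (Suc k))"
      using c7[of "Suc k"] c8[of "Suc k"] True by simp
    ultimately show ?thesis using cg_coeff[OF intp_Theta Theta_monic, of "Suc k" "Theta q n * Atrunc q b (Suc k)" "Atrunc q a (Suc k)" k]
      by simp
  next
    case False
    thus ?thesis using a2 by (simp add: Amult_def Atrunc_Phi)
  qed
  have low: "\<forall>k<n. Amult q (Phi n) b k = 0" by (simp add: Amult_def Atrunc_Phi)
  show ?thesis using bZ main low by blast
qed

end

end

lemma Aring_simps:
  "carrier (Aring p q) = {a. \<forall>n. a n \<in> Zp p}"
  "a \<oplus>\<^bsub>Aring p q\<^esub> b = (\<lambda>n. a n + b n)"
  "a \<otimes>\<^bsub>Aring p q\<^esub> b = Amult q a b"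
  "\<one>\<^bsub>Aring p q\<^esub> = Aconst 1"
  "\<zero>\<^bsub>Aring p q\<^esub> = Aconst 0"
  by (auto simp: Aring_def Aconst_def)

lemma Atrunc_Aconst: "Atrunc q (Aconst c) (Suc k) = [:c:]"
proof -
  have "Atrunc q (Aconst c) (Suc k) = (\<Sum>j\<in>{..<Suc k}. (if j = 0 then smult c (Theta q j) else 0))"
    unfolding Atrunc_def Aconst_def by (rule sum.cong) auto
  also have "\<dots> = smult c (Theta q 0)" using sum.delta[of "{..<Suc k}" 0 "\<lambda>j. smult c (Theta q j)"] by simp
  finally show ?thesis by (simp add: Theta_def)
qed

lemma Amult_Aconst: "Amult q (Aconst c) b = (\<lambda>k. c * b k)"
proof
  fix k
  have "Amult q (Aconst c) b k = coeff (smult c (Atrunc q b (Suc k) mod Theta q (Suc k))) k"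
    unfolding Amult_def Atrunc_Aconst by (simp add: mod_smult_left)
  moreover have "coeff (Atrunc q b (Suc k) mod Theta q (Suc k)) k = b k"
    unfolding Atrunc_mod by (rule Atrunc_coeff_top)
  ultimately show "Amult q (Aconst c) b k = c * b k" by simp
qed

lemma Aconst_mult: "Amult q (Aconst c) (Aconst d) = Aconst (c * d)"
  unfolding Amult_Aconst by (auto simp: Aconst_def)

locale kmod =
  fixes p q :: nat and M :: "(nat \<Rightarrow> rat, 'b) module"
  assumes modM: "module (Aring p q) M" and pp: "Factorial_Ring.prime p"
begin

sublocale module "Aring p q" M by (rule modM)

definition sc :: "rat \<Rightarrow> 'b \<Rightarrow> 'b" where "sc r v = Aconst r \<odot>\<^bsub>M\<^esub> v"

lemma Aconst_carrier: "r \<in> Zp p \<Longrightarrow> Aconst r \<in> carrier (Aring p q)"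
  by (auto simp: Aring_simps Aconst_def Zp_0[OF pp])

lemma sc_closed [intro, simp]: "r \<in> Zp p \<Longrightarrow> v \<in> carrier M \<Longrightarrow> sc r v \<in> carrier M"
  unfolding sc_def using Aconst_carrier by auto

lemma sc_mult: "r \<in> Zp p \<Longrightarrow> s \<in> Zp p \<Longrightarrow> v \<in> carrier M \<Longrightarrow> sc r (sc s v) = sc (r * s) v"
  unfolding sc_def using smult_assoc1[OF Aconst_carrier Aconst_carrier, of r s v]
  by (simp add: Aring_simps Aconst_mult)

lemma sc_add_l: "r \<in> Zp p \<Longrightarrow> s \<in> Zp p \<Longrightarrow> v \<in> carrier M \<Longrightarrow> sc (r + s) v = sc r v \<oplus>\<^bsub>M\<^esub> sc s v"
proof -
  assume a: "r \<in> Zp p" "s \<in> Zp p" "v \<in> carrier M"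
  have "Aconst (r + s) = Aconst r \<oplus>\<^bsub>Aring p q\<^esub> Aconst s" by (auto simp: Aring_simps Aconst_def)
  thus ?thesis unfolding sc_def using smult_l_distr[OF Aconst_carrier Aconst_carrier, of r s v] a by simp
qed

lemma sc_add_r: "r \<in> Zp p \<Longrightarrow> v \<in> carrier M \<Longrightarrow> w \<in> carrier M \<Longrightarrow> sc r (v \<oplus>\<^bsub>M\<^esub> w) = sc r v \<oplus>\<^bsub>M\<^esub> sc r w"
  unfolding sc_def using smult_r_distr[OF Aconst_carrier] by blast

lemma sc_1 [simp]: "v \<in> carrier M \<Longrightarrow> sc 1 v = v"
  unfolding sc_def using smult_one by (metis Aring_simps(4))

lemma sc_0 [simp]: "v \<in> carrier M \<Longrightarrow> sc 0 v = \<zero>\<^bsub>M\<^esub>"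
  unfolding sc_def using smult_l_null by (metis Aring_simps(5))

lemma sc_zero [simp]: "r \<in> Zp p \<Longrightarrow> sc r \<zero>\<^bsub>M\<^esub> = \<zero>\<^bsub>M\<^esub>"
  unfolding sc_def using smult_r_null Aconst_carrier by blast

definition spn :: "'b set \<Rightarrow> 'b set" where
  "spn S = {finsum M (\<lambda>s. Aconst (c s) \<odot>\<^bsub>M\<^esub> s) S | c. \<forall>s\<in>S. c s \<in> Zp p}"

lemma spn_alt: "spn S = {finsum M (\<lambda>s. sc (c s) s) S | c. \<forall>s\<in>S. c s \<in> Zp p}"
  unfolding spn_def sc_def ..

end


context kmod
begin

lemma spnI: "(\<And>s. s \<in> S \<Longrightarrow> c s \<in> Zp p) \<Longrightarrow> finsum M (\<lambda>s. sc (c s) s) S \<in> spn S"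
  unfolding spn_alt by blast

lemma spnE: "v \<in> spn S \<Longrightarrow> (\<And>c. (\<And>s. s \<in> S \<Longrightarrow> c s \<in> Zp p) \<Longrightarrow> v = finsum M (\<lambda>s. sc (c s) s) S \<Longrightarrow> P) \<Longrightarrow> P"
  unfolding spn_alt by blast

lemma fs_closed: "S \<subseteq> carrier M \<Longrightarrow> (\<And>s. s \<in> S \<Longrightarrow> c s \<in> Zp p) \<Longrightarrow> (\<lambda>s. sc (c s) s) \<in> S \<rightarrow> carrier M"
  by (auto intro!: sc_closed)

lemma spn_closed: "finite S \<Longrightarrow> S \<subseteq> carrier M \<Longrightarrow> v \<in> spn S \<Longrightarrow> v \<in> carrier M"
  by (erule spnE) (simp add: M.finsum_closed fs_closed)

lemma spn_zero: "finite S \<Longrightarrow> S \<subseteq> carrier M \<Longrightarrow> \<zero>\<^bsub>M\<^esub> \<in> spn S"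
proof -
  assume a: "finite S" "S \<subseteq> carrier M"
  have "finsum M (\<lambda>s. sc 0 s) S = finsum M (\<lambda>s. \<zero>\<^bsub>M\<^esub>) S"
    using a by (intro M.finsum_cong') auto
  also have "\<dots> = \<zero>\<^bsub>M\<^esub>" by (rule M.finsum_zero)
  finally have "finsum M (\<lambda>s. sc ((\<lambda>_. 0) s) s) S = \<zero>\<^bsub>M\<^esub>" by simp
  moreover have "finsum M (\<lambda>s. sc ((\<lambda>_. 0) s) s) S \<in> spn S" by (rule spnI) (simp add: Zp_0[OF pp])
  ultimately show ?thesis by simp
qed

lemma spn_add: "finite S \<Longrightarrow> S \<subseteq> carrier M \<Longrightarrow> u \<in> spn S \<Longrightarrow> v \<in> spn S \<Longrightarrow> u \<oplus>\<^bsub>M\<^esub> v \<in> spn S"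
proof -
  assume a: "finite S" "S \<subseteq> carrier M" "u \<in> spn S" "v \<in> spn S"
  obtain c where c: "\<And>s. s \<in> S \<Longrightarrow> c s \<in> Zp p" "u = finsum M (\<lambda>s. sc (c s) s) S" by (rule spnE[OF a(3)]) blast
  obtain d where d: "\<And>s. s \<in> S \<Longrightarrow> d s \<in> Zp p" "v = finsum M (\<lambda>s. sc (d s) s) S" by (rule spnE[OF a(4)]) blast
  have "u \<oplus>\<^bsub>M\<^esub> v = finsum M (\<lambda>s. sc (c s) s \<oplus>\<^bsub>M\<^esub> sc (d s) s) S"
    unfolding c(2) d(2) by (rule M.finsum_addf[symmetric, OF fs_closed[OF a(2) c(1)] fs_closed[OF a(2) d(1)]])
  also have "\<dots> = finsum M (\<lambda>s. sc ((\<lambda>s. c s + d s) s) s) S"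
  proof (rule M.finsum_cong')
    fix s assume "s \<in> S"
    thus "sc (c s) s \<oplus>\<^bsub>M\<^esub> sc (d s) s = sc ((\<lambda>s. c s + d s) s) s"
      using c(1) d(1) a(2) by (simp add: sc_add_l subset_iff)
  next
    show "(\<lambda>s. sc ((\<lambda>s. c s + d s) s) s) \<in> S \<rightarrow> carrier M"
      using a(2) c(1) d(1) Zp_add[OF pp] by (intro fs_closed) auto
  qed simp
  also have "\<dots> \<in> spn S" using c(1) d(1) Zp_add[OF pp] by (intro spnI) auto
  finally show ?thesis .
qed

lemma spn_sc: "finite S \<Longrightarrow> S \<subseteq> carrier M \<Longrightarrow> r \<in> Zp p \<Longrightarrow> v \<in> spn S \<Longrightarrow> sc r v \<in> spn S"
proof -
  assume a: "finite S" "S \<subseteq> carrier M" "r \<in> Zp p" "v \<in> spn S"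
  obtain d where d: "\<And>s. s \<in> S \<Longrightarrow> d s \<in> Zp p" "v = finsum M (\<lambda>s. sc (d s) s) S" by (rule spnE[OF a(4)]) blast
  have "sc r v = finsum M (\<lambda>s. sc r (sc (d s) s)) S"
    unfolding d(2) sc_def[of r] by (rule finsum_smult_ldistr[OF a(1) Aconst_carrier[OF a(3)] fs_closed[OF a(2) d(1)]])
  also have "\<dots> = finsum M (\<lambda>s. sc ((\<lambda>s. r * d s) s) s) S"
  proof (rule M.finsum_cong')
    fix s assume "s \<in> S"
    thus "sc r (sc (d s) s) = sc ((\<lambda>s. r * d s) s) s"
      using d(1) a(2,3) by (simp add: sc_mult subset_iff)
  next
    show "(\<lambda>s. sc ((\<lambda>s. r * d s) s) s) \<in> S \<rightarrow> carrier M"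
      using a(2,3) d(1) Zp_mult[OF pp] by (intro fs_closed) auto
  qed simp
  also have "\<dots> \<in> spn S" using a(3) d(1) Zp_mult[OF pp] by (intro spnI) auto
  finally show ?thesis .
qed

lemma spn_insert:
  assumes "finite S" "S \<subseteq> carrier M" "s \<notin> S" "s \<in> carrier M"
  shows "v \<in> spn (insert s S) \<longleftrightarrow> (\<exists>r\<in>Zp p. \<exists>v'\<in>spn S. v = sc r s \<oplus>\<^bsub>M\<^esub> v')"
proof
  assume "v \<in> spn (insert s S)"
  then obtain c where c: "\<And>t. t \<in> insert s S \<Longrightarrow> c t \<in> Zp p" "v = finsum M (\<lambda>t. sc (c t) t) (insert s S)"
    by (rule spnE) blast
  have cS: "\<And>t. t \<in> S \<Longrightarrow> c t \<in> Zp p" using c(1) by blast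
  have "v = sc (c s) s \<oplus>\<^bsub>M\<^esub> finsum M (\<lambda>t. sc (c t) t) S"
    unfolding c(2) by (rule M.finsum_insert[OF assms(1,3) fs_closed[OF assms(2) cS]]) (use c(1) assms(4) in auto)
  moreover have "finsum M (\<lambda>t. sc (c t) t) S \<in> spn S" using cS by (rule spnI)
  moreover have "c s \<in> Zp p" using c(1) by blast
  ultimately show "\<exists>r\<in>Zp p. \<exists>v'\<in>spn S. v = sc r s \<oplus>\<^bsub>M\<^esub> v'" by blast
next
  assume "\<exists>r\<in>Zp p. \<exists>v'\<in>spn S. v = sc r s \<oplus>\<^bsub>M\<^esub> v'"
  then obtain r v' where rv: "r \<in> Zp p" "v' \<in> spn S" "v = sc r s \<oplus>\<^bsub>M\<^esub> v'" by blast
  obtain c where c: "\<And>t. t \<in> S \<Longrightarrow> c t \<in> Zp p" "v' = finsum M (\<lambda>t. sc (c t) t) S" by (rule spnE[OF rv(2)]) blast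
  define c' where "c' = c(s := r)"
  have c'Z: "\<And>t. t \<in> insert s S \<Longrightarrow> c' t \<in> Zp p" using c(1) rv(1) unfolding c'_def by auto
  have c'S: "\<And>t. t \<in> S \<Longrightarrow> c' t \<in> Zp p" using c'Z by blast
  have "finsum M (\<lambda>t. sc (c' t) t) S = v'"
    unfolding c(2)
  proof (rule M.finsum_cong')
    fix t assume "t \<in> S"
    thus "sc (c' t) t = sc (c t) t" using assms(3) unfolding c'_def by auto
  next
    show "(\<lambda>t. sc (c t) t) \<in> S \<rightarrow> carrier M" by (rule fs_closed[OF assms(2) c(1)])
  qed simp
  moreover have "finsum M (\<lambda>t. sc (c' t) t) (insert s S) = sc (c' s) s \<oplus>\<^bsub>M\<^esub> finsum M (\<lambda>t. sc (c' t) t) S"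
    by (rule M.finsum_insert[OF assms(1,3) fs_closed[OF assms(2) c'S]]) (use c'Z assms(4) in auto)
  moreover have "c' s = r" unfolding c'_def by simp
  ultimately have "finsum M (\<lambda>t. sc (c' t) t) (insert s S) = v" using rv(3) by simp
  moreover have "finsum M (\<lambda>t. sc (c' t) t) (insert s S) \<in> spn (insert s S)" using c'Z by (rule spnI)
  ultimately show "v \<in> spn (insert s S)" by simp
qed

end


context kmod
begin

lemma sc_diff_spn:
  assumes S: "finite S" "S \<subseteq> carrier M" and s: "s \<in> carrier M"
    and r: "r \<in> Zp p" "r' \<in> Zp p" and u: "u \<in> spn S" "u' \<in> spn S"
    and eq: "sc r s \<oplus>\<^bsub>M\<^esub> u = sc r' s \<oplus>\<^bsub>M\<^esub> u'"
  shows "sc (r - r') s \<in> spn S"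
proof -
  have uc: "u \<in> carrier M" "u' \<in> carrier M" using u spn_closed S by auto
  have Z: "- 1 \<in> Zp p" "- r' \<in> Zp p" using r Zp_uminus[OF pp] Zp_1[OF pp] by auto
  have n1: "u \<oplus>\<^bsub>M\<^esub> sc (-1) u = \<zero>\<^bsub>M\<^esub>"
    using sc_add_l[of 1 "-1" u] uc Z Zp_1[OF pp] by simp
  have n2: "sc r' s \<oplus>\<^bsub>M\<^esub> sc (- r') s = \<zero>\<^bsub>M\<^esub>"
    using sc_add_l[of r' "-r'" s] s Z r by simp
  have e1: "sc (r - r') s = sc r s \<oplus>\<^bsub>M\<^esub> sc (- r') s"
    using sc_add_l[of r "-r'" s] s Z r by simp
  have "sc r s \<oplus>\<^bsub>M\<^esub> sc (- r') s = (sc r s \<oplus>\<^bsub>M\<^esub> sc (- r') s) \<oplus>\<^bsub>M\<^esub> (u \<oplus>\<^bsub>M\<^esub> sc (-1) u)"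
    using n1 s r Z by simp
  also have "\<dots> = (sc r s \<oplus>\<^bsub>M\<^esub> u) \<oplus>\<^bsub>M\<^esub> (sc (- r') s \<oplus>\<^bsub>M\<^esub> sc (-1) u)"
    using s r Z uc by (simp add: M.a_ac)
  also have "\<dots> = (sc r' s \<oplus>\<^bsub>M\<^esub> u') \<oplus>\<^bsub>M\<^esub> (sc (- r') s \<oplus>\<^bsub>M\<^esub> sc (-1) u)"
    using eq by simp
  also have "\<dots> = (sc r' s \<oplus>\<^bsub>M\<^esub> sc (- r') s) \<oplus>\<^bsub>M\<^esub> (u' \<oplus>\<^bsub>M\<^esub> sc (-1) u)"
    using s r Z uc by (simp add: M.a_ac)
  also have "\<dots> = u' \<oplus>\<^bsub>M\<^esub> sc (-1) u"
    using n2 s r Z uc by simp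
  finally have "sc (r - r') s = u' \<oplus>\<^bsub>M\<^esub> sc (-1) u" using e1 by simp
  thus ?thesis using spn_add[OF S u(2) spn_sc[OF S Z(1) u(1)]] by simp
qed

lemma krull:
  assumes "finite S"
  shows "S \<subseteq> carrier M \<Longrightarrow> (\<And>k. \<exists>v\<in>spn S. w = sc (of_nat p ^ k) v) \<Longrightarrow> w = \<zero>\<^bsub>M\<^esub>"
  using assms
proof (induction S arbitrary: w rule: finite_induct)
  case empty
  obtain v where v: "v \<in> spn {}" "w = sc (of_nat p ^ 0) v" using empty.prems(2) by blast
  have "spn {} = {\<zero>\<^bsub>M\<^esub>}" unfolding spn_alt by auto
  thus ?case using v by simp
next
  case (insert s S w)
  have S: "finite S" "S \<subseteq> carrier M" and s: "s \<in> carrier M" using insert by auto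
  have Zpp: "of_nat p ^ k \<in> Zp p" for k using Zp_natI[OF pp] Zp_power[OF pp] by blast
  have dec: "\<exists>r\<in>Zp p. \<exists>v'\<in>spn S. w = sc (of_nat p ^ k) (sc r s \<oplus>\<^bsub>M\<^esub> v')" for k
  proof -
    obtain v where v: "v \<in> spn (insert s S)" "w = sc (of_nat p ^ k) v" using insert.prems(2)[of k] by blast
    then obtain r v' where "r \<in> Zp p" "v' \<in> spn S" "v = sc r s \<oplus>\<^bsub>M\<^esub> v'"
      using spn_insert[OF S insert.hyps(2) s] by blast
    thus ?thesis using v by blast
  qed
  show ?case
  proof (cases "\<exists>r\<in>Zp p. r \<noteq> 0 \<and> sc r s \<in> spn S")
    case True
    then obtain r where r: "r \<in> Zp p" "r \<noteq> 0" "sc r s \<in> spn S" by blast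
    obtain e u where eu: "u \<in> Zp p" "1 / u \<in> Zp p" "r = of_nat p ^ e * u"
      using Zp_val[OF pp r(1,2)] by blast
    have u0: "u \<noteq> 0" using eu r by auto
    have spe: "sc (of_nat p ^ e) s \<in> spn S"
    proof -
      have "sc (1 / u) (sc r s) = sc (of_nat p ^ e) s"
        using sc_mult[OF eu(2) r(1) s] eu u0 by simp
      thus ?thesis using spn_sc[OF S eu(2) r(3)] by simp
    qed
    show ?thesis
    proof (rule insert.IH[OF S(2)])
      fix k
      obtain r' v' where rv: "r' \<in> Zp p" "v' \<in> spn S" "w = sc (of_nat p ^ (k + e)) (sc r' s \<oplus>\<^bsub>M\<^esub> v')"
        using dec[of "k + e"] by blast
      have v'c: "v' \<in> carrier M" using rv spn_closed S by auto
      have "w = sc (of_nat p ^ k) (sc (of_nat p ^ e) (sc r' s \<oplus>\<^bsub>M\<^esub> v'))"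
        using rv v'c s Zpp by (simp add: sc_mult power_add)
      also have "sc (of_nat p ^ e) (sc r' s \<oplus>\<^bsub>M\<^esub> v') = sc r' (sc (of_nat p ^ e) s) \<oplus>\<^bsub>M\<^esub> sc (of_nat p ^ e) v'"
        using rv v'c s Zpp by (simp add: sc_add_r sc_mult mult.commute)
      finally have "w = sc (of_nat p ^ k) (sc r' (sc (of_nat p ^ e) s) \<oplus>\<^bsub>M\<^esub> sc (of_nat p ^ e) v')" .
      moreover have "sc r' (sc (of_nat p ^ e) s) \<oplus>\<^bsub>M\<^esub> sc (of_nat p ^ e) v' \<in> spn S"
        using spn_add[OF S spn_sc[OF S rv(1) spe] spn_sc[OF S Zpp rv(2)]] .
      ultimately show "\<exists>v\<in>spn S. w = sc (of_nat p ^ k) v" by blast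
    qed
  next
    case False
    obtain r0 v0 where rv0: "r0 \<in> Zp p" "v0 \<in> spn S" "w = sc (of_nat p ^ 0) (sc r0 s \<oplus>\<^bsub>M\<^esub> v0)"
      using dec[of 0] by blast
    have v0c: "v0 \<in> carrier M" using rv0 spn_closed S by auto
    have w0: "w = sc r0 s \<oplus>\<^bsub>M\<^esub> v0" using rv0 v0c s by simp
    have gen: "\<exists>rk\<in>Zp p. \<exists>vk\<in>spn S. w = sc (of_nat p ^ k * rk) s \<oplus>\<^bsub>M\<^esub> sc (of_nat p ^ k) vk \<and> r0 = of_nat p ^ k * rk" for k
    proof -
      obtain rk vk where rv: "rk \<in> Zp p" "vk \<in> spn S" "w = sc (of_nat p ^ k) (sc rk s \<oplus>\<^bsub>M\<^esub> vk)"
        using dec[of k] by blast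
      have vkc: "vk \<in> carrier M" using rv spn_closed S by auto
      have wk: "w = sc (of_nat p ^ k * rk) s \<oplus>\<^bsub>M\<^esub> sc (of_nat p ^ k) vk"
        using rv vkc s Zpp by (simp add: sc_add_r sc_mult)
      have pk: "of_nat p ^ k * rk \<in> Zp p" using Zpp rv Zp_mult[OF pp] by blast
      have eqn: "sc r0 s \<oplus>\<^bsub>M\<^esub> v0 = sc (of_nat p ^ k * rk) s \<oplus>\<^bsub>M\<^esub> sc (of_nat p ^ k) vk"
        using w0 wk by simp
      have "sc (r0 - of_nat p ^ k * rk) s \<in> spn S"
        by (rule sc_diff_spn[OF S s rv0(1) pk rv0(2) spn_sc[OF S Zpp[of k] rv(2)] eqn])
      hence "r0 - of_nat p ^ k * rk = 0" using False Zp_diff[OF pp rv0(1) pk] by blast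
      hence "r0 = of_nat p ^ k * rk" by simp
      thus ?thesis using rv(1,2) wk by blast
    qed
    have "r0 = 0"
      using Zp_inter[OF pp rv0(1)] gen by blast
    show ?thesis
    proof (rule insert.IH[OF S(2)])
      fix k
      obtain rk vk where rv: "rk \<in> Zp p" "vk \<in> spn S"
        "w = sc (of_nat p ^ k * rk) s \<oplus>\<^bsub>M\<^esub> sc (of_nat p ^ k) vk" "r0 = of_nat p ^ k * rk"
        using gen[of k] by blast
      have vkc: "vk \<in> carrier M" using rv spn_closed S by auto
      have pn: "(of_nat p :: rat) ^ k \<noteq> 0" using pp by (simp add: prime_gt_0_nat)
      have "rk = 0" using rv(4) \<open>r0 = 0\<close> pn by (metis mult_eq_0_iff)
      hence "w = sc 0 s \<oplus>\<^bsub>M\<^esub> sc (of_nat p ^ k) vk" using rv(3) by simp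
      also have "\<dots> = sc (of_nat p ^ k) vk" using s vkc Zpp by simp
      finally have "w = sc (of_nat p ^ k) vk" .
      thus "\<exists>v\<in>spn S. w = sc (of_nat p ^ k) v" using rv by blast
    qed
  qed
qed

end


theorem corollary3p4:
  fixes p q :: nat and M :: "(nat \<Rightarrow> rat, 'b) module" and x :: 'b and n :: nat
  assumes "Factorial_Ring.prime p" and "odd p"
    and "residue_primroot (p ^ 2) q"
    and "module (Aring p q) M"
    and "locally_fg p M"
    and "x \<in> carrier M"
    and "Phi n \<odot>\<^bsub>M\<^esub> x = \<zero>\<^bsub>M\<^esub>"
  shows "\<forall>a\<in>Afilt p n. a \<odot>\<^bsub>M\<^esub> x = \<zero>\<^bsub>M\<^esub>"
proof -
  have pp: "Factorial_Ring.prime p" by fact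
  interpret kmod p q M using assms(1,4) by (intro kmod.intro)
  have pq: "\<not> p dvd q"
  proof
    assume "p dvd q"
    have "coprime (p ^ 2) q" using assms(3) by (simp add: residue_primroot_def)
    hence "coprime p q" by simp
    hence "is_unit p" using \<open>p dvd q\<close> coprime_common_divisor[of p q p] by simp
    thus False using pp not_prime_unit by blast
  qed
  have carr: "carrier (Aring p q) = {a. \<forall>n. a n \<in> Zp p}" by (rule Aring_simps)
  have Phic: "Phi n \<in> carrier (Aring p q)"
    unfolding carr Phi_def using Zp_0[OF pp] Zp_1[OF pp] by auto
  have Afc: "Afilt p n \<subseteq> carrier (Aring p q)" unfolding carr Afilt_def by auto
  have Zpp: "of_nat p ^ k \<in> Zp p" for k using Zp_natI[OF pp] Zp_power[OF pp] by blast
  have step: "\<forall>a\<in>Afilt p n. \<exists>c\<in>Afilt p n. a \<odot>\<^bsub>M\<^esub> x = sc (of_nat p ^ k) (c \<odot>\<^bsub>M\<^esub> x)" for k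
  proof (induction k)
    case 0
    show ?case
    proof
      fix a assume a: "a \<in> Afilt p n"
      hence "a \<odot>\<^bsub>M\<^esub> x \<in> carrier M" using Afc assms(6) by blast
      thus "\<exists>c\<in>Afilt p n. a \<odot>\<^bsub>M\<^esub> x = sc (of_nat p ^ 0) (c \<odot>\<^bsub>M\<^esub> x)"
        using a by (intro bexI[of _ a]) simp_all
    qed
  next
    case (Suc k)
    show ?case
    proof
      fix a assume a: "a \<in> Afilt p n"
      have a1: "\<And>k. a k \<in> Zp p" and a2: "\<And>k. k < n \<Longrightarrow> a k = 0" using a by (auto simp: Afilt_def)
      obtain b where b: "\<forall>j. b j \<in> Zp p" "\<forall>k. Amult q (Phi n) b k - a k \<in> pZ p"
        "\<forall>k<n. Amult q (Phi n) b k = 0"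
        using ring_step[OF pp pq, where a=a and n=n, OF a1 a2] by blast
      define c where "c k = (a k - Amult q (Phi n) b k) / of_nat p" for k
      have "a k - Amult q (Phi n) b k \<in> pZ p" for k
        using pZ_uminus[OF pp b(2)[rule_format, of k]] by simp
      hence cZ: "c k \<in> Zp p" for k
      proof -
        obtain s where s: "s \<in> Zp p" "a k - Amult q (Phi n) b k = of_nat p * s"
          using pZ_iff[OF pp] \<open>\<And>k. a k - Amult q (Phi n) b k \<in> pZ p\<close>[of k] by blast
        thus ?thesis unfolding c_def using p0[OF pp] by simp
      qed
      have cA: "c \<in> Afilt p n" using cZ a2 b(3) unfolding Afilt_def c_def by auto
      have bc: "b \<in> carrier (Aring p q)" using b carr by auto
      have cc: "c \<in> carrier (Aring p q)" using cA Afc by auto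
      have pc: "Aconst (of_nat p) \<in> carrier (Aring p q)" using Aconst_carrier Zp_natI[OF pp] by blast
      have p0: "(of_nat p :: rat) \<noteq> 0" using pp by auto
      have aeq: "a = (Phi n \<otimes>\<^bsub>Aring p q\<^esub> b) \<oplus>\<^bsub>Aring p q\<^esub> (Aconst (of_nat p) \<otimes>\<^bsub>Aring p q\<^esub> c)"
        unfolding Aring_simps Amult_Aconst
      proof
        fix k
        show "a k = Amult q (Phi n) b k + of_nat p * c k" unfolding c_def using p0 by simp
      qed
      have m1: "Phi n \<otimes>\<^bsub>Aring p q\<^esub> b \<in> carrier (Aring p q)" using Phic bc by (rule m_closed)
      have m2: "Aconst (of_nat p) \<otimes>\<^bsub>Aring p q\<^esub> c \<in> carrier (Aring p q)" using pc cc by (rule m_closed)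
      have "a \<odot>\<^bsub>M\<^esub> x = ((Phi n \<otimes>\<^bsub>Aring p q\<^esub> b) \<odot>\<^bsub>M\<^esub> x) \<oplus>\<^bsub>M\<^esub> ((Aconst (of_nat p) \<otimes>\<^bsub>Aring p q\<^esub> c) \<odot>\<^bsub>M\<^esub> x)"
        by (subst aeq) (rule smult_l_distr[OF m1 m2 assms(6)])
      also have "(Phi n \<otimes>\<^bsub>Aring p q\<^esub> b) \<odot>\<^bsub>M\<^esub> x = \<zero>\<^bsub>M\<^esub>"
      proof -
        have "(Phi n \<otimes>\<^bsub>Aring p q\<^esub> b) = (b \<otimes>\<^bsub>Aring p q\<^esub> Phi n)" using Phic bc by (rule m_comm)
        hence "(Phi n \<otimes>\<^bsub>Aring p q\<^esub> b) \<odot>\<^bsub>M\<^esub> x = b \<odot>\<^bsub>M\<^esub> (Phi n \<odot>\<^bsub>M\<^esub> x)"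
          using smult_assoc1[OF bc Phic assms(6)] by simp
        also have "\<dots> = \<zero>\<^bsub>M\<^esub>" using assms(7) bc by simp
        finally show ?thesis .
      qed
      also have "(Aconst (of_nat p) \<otimes>\<^bsub>Aring p q\<^esub> c) \<odot>\<^bsub>M\<^esub> x = sc (of_nat p) (c \<odot>\<^bsub>M\<^esub> x)"
        unfolding sc_def using pc cc assms(6) smult_assoc1 by blast
      finally have ax: "a \<odot>\<^bsub>M\<^esub> x = sc (of_nat p) (c \<odot>\<^bsub>M\<^esub> x)"
        using cc assms(6) Zp_natI[OF pp] by simp
      obtain c' where c': "c' \<in> Afilt p n" "c \<odot>\<^bsub>M\<^esub> x = sc (of_nat p ^ k) (c' \<odot>\<^bsub>M\<^esub> x)"
        using Suc.IH cA by blast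
      have "c' \<odot>\<^bsub>M\<^esub> x \<in> carrier M" using c' Afc assms(6) by auto
      hence "a \<odot>\<^bsub>M\<^esub> x = sc (of_nat p ^ Suc k) (c' \<odot>\<^bsub>M\<^esub> x)"
        using ax c' Zpp Zp_natI[OF pp] by (simp add: sc_mult)
      thus "\<exists>c\<in>Afilt p n. a \<odot>\<^bsub>M\<^esub> x = sc (of_nat p ^ Suc k) (c \<odot>\<^bsub>M\<^esub> x)" using c' by blast
    qed
  qed
  have "\<exists>S. finite S \<and> S \<subseteq> carrier M \<and>
     {a \<odot>\<^bsub>M\<^esub> x | a. a \<in> {a. \<forall>n. a n \<in> Zp p}} =
     {finsum M (\<lambda>s. Aconst (c s) \<odot>\<^bsub>M\<^esub> s) S | c. \<forall>s\<in>S. c s \<in> Zp p}"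
    by (rule bspec[OF assms(5)[unfolded locally_fg_def] assms(6)])
  then obtain S where S: "finite S" "S \<subseteq> carrier M"
    "{a \<odot>\<^bsub>M\<^esub> x | a. a \<in> {a. \<forall>n. a n \<in> Zp p}} = spn S"
    unfolding spn_def by blast
  show ?thesis
  proof
    fix a assume a: "a \<in> Afilt p n"
    show "a \<odot>\<^bsub>M\<^esub> x = \<zero>\<^bsub>M\<^esub>"
    proof (rule krull[OF S(1) S(2)])
      fix k
      obtain c where c: "c \<in> Afilt p n" "a \<odot>\<^bsub>M\<^esub> x = sc (of_nat p ^ k) (c \<odot>\<^bsub>M\<^esub> x)"
        using step[of k] a by blast
      have "c \<in> {a. \<forall>n. a n \<in> Zp p}" using c(1) Afc carr by blast
      hence "c \<odot>\<^bsub>M\<^esub> x \<in> {a \<odot>\<^bsub>M\<^esub> x | a. a \<in> {a. \<forall>n. a n \<in> Zp p}}" by blast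
      hence "c \<odot>\<^bsub>M\<^esub> x \<in> spn S" unfolding S(3) .
      thus "\<exists>v\<in>spn S. a \<odot>\<^bsub>M\<^esub> x = sc (of_nat p ^ k) v" using c by blast
    qed
  qed
qed

end
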